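(* Let $T$ be a reducing triangulation (possibly infinite, e.g. lifted to a covering space) of an oriented surface without boundary. Let $C$ and $C'$ be two disjoint simple closed walks in $T$ that together bound an annulus. Then $C$ and $C'$ are not both reduced closed walks.
   Context: A triangulation is an embedded graph whose faces are all open disks bounded by three edge-sides. A reducing triangulation $T$ of an oriented surface without boundary is a triangulation in which every vertex has degree at least $8$ and each triangle is colored red or blue so that adjacent triangles have different colors. It may be infinite, for instance when lifted to a covering space together with its colors. Suppose a walk traverses a directed edge $e$ into a vertex $v$ and then leaves $v$ along a directed edge $e'$. This occurrence of $v$ makes a $k$-turn ($k\ge 0$) if exactly $k$ triangles around $v$ lie to the left of the length-two walk $e\,e'$, between $e$ and $e'$ in the cyclic order around $v$. It makes a $-k$-turn ($k\ge 1$) if exactly $k$ triangles lie to its right. A turn is named by an integer in $\{-3,\dots,3\}$ when possible, which is unambiguous since degrees are at least $8$; otherwise it is named by the positive integer. A $k_b$-turn (resp. $k_r$-turn) is a $k$-turn in which the triangle to the left of $e$ is blue (resp. red). A bad turn is a $0$-turn, a $1$-turn, a $-1$-turn, a $2_r$-turn or a $-2_r$-turn. A closed walk, whose vertices are cyclically ordered and all interior, is a reduced closed walk if none of its vertices makes a bad turn, not all of its vertices make $3_r$-turns, and not all of its vertices make $-3_b$-turns. Reversing a closed walk preserves reducedness. *)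

theory Defs
  imports Main
begin

(* Combinatorial model of an (oriented, possibly infinite) triangulated surface
   without boundary, as a combinatorial map on a type 'd of darts
   (= directed edges / edge-sides):
     alpha d  : the reverse dart of d (fixed-point-free involution),
     phi d    : the next dart along the boundary of the triangle to the LEFT of d
                (faces are traversed counterclockwise; the triangle to the left of
                d is the phi-orbit of d; phi^3 = id, phi has no fixed points),
     rot      : phi o alpha, the (clockwise) rotation of the darts leaving a vertex.
   The tail vertex of a dart d is its rot-orbit; the head of d is the tail of alpha d. *)

datatype color = Red | Blue

definition rot :: "('d \<Rightarrow> 'd) \<Rightarrow> ('d \<Rightarrow> 'd) \<Rightarrow> 'd \<Rightarrow> 'd" where
  "rot alpha phi = phi \<circ> alpha"

(* the vertex at the tail of dart d, represented as the set of darts leaving it *)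
definition vtx :: "('d \<Rightarrow> 'd) \<Rightarrow> 'd \<Rightarrow> 'd set" where
  "vtx sigma d = {(sigma ^^ k) d | k. True}"

definition deg :: "('d \<Rightarrow> 'd) \<Rightarrow> 'd \<Rightarrow> nat" where
  "deg sigma d = card (vtx sigma d)"

definition reducing_triangulation ::
  "('d \<Rightarrow> 'd) \<Rightarrow> ('d \<Rightarrow> 'd) \<Rightarrow> ('d \<Rightarrow> color) \<Rightarrow> bool" where
  "reducing_triangulation alpha phi col \<longleftrightarrow>
     (\<forall>d. alpha (alpha d) = d \<and> alpha d \<noteq> d) \<and>
     (\<forall>d. phi (phi (phi d)) = d \<and> phi d \<noteq> d) \<and>
     (\<forall>d. finite (vtx (rot alpha phi) d) \<and> deg (rot alpha phi) d \<ge> 8) \<and>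
     (\<forall>d. col (phi d) = col d \<and> col (alpha d) \<noteq> col d)"

definition closed_walk :: "('d \<Rightarrow> 'd) \<Rightarrow> ('d \<Rightarrow> 'd) \<Rightarrow> 'd list \<Rightarrow> bool" where
  "closed_walk alpha phi ds \<longleftrightarrow> ds \<noteq> [] \<and>
     (\<forall>i < length ds. ds ! ((i + 1) mod length ds) \<in> vtx (rot alpha phi) (alpha (ds ! i)))"

definition simple_walk :: "('d \<Rightarrow> 'd) \<Rightarrow> ('d \<Rightarrow> 'd) \<Rightarrow> 'd list \<Rightarrow> bool" where
  "simple_walk alpha phi ds \<longleftrightarrow>
     (\<forall>i < length ds. \<forall>j < length ds. i \<noteq> j \<longrightarrow>
        vtx (rot alpha phi) (ds ! i) \<noteq> vtx (rot alpha phi) (ds ! j))"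

definition disjoint_walks :: "('d \<Rightarrow> 'd) \<Rightarrow> ('d \<Rightarrow> 'd) \<Rightarrow> 'd list \<Rightarrow> 'd list \<Rightarrow> bool" where
  "disjoint_walks alpha phi C C' \<longleftrightarrow>
     (\<forall>i < length C. \<forall>j < length C'. vtx (rot alpha phi) (C ! i) \<noteq> vtx (rot alpha phi) (C' ! j))"

(* number of triangles to the LEFT of the length-two walk e e' at the head of e:
   the darts leaving the head of e are rot^k (alpha e), k = 0 .. deg-1, clockwise,
   and between rot^j (alpha e) and rot^(j+1) (alpha e) lies exactly one triangle *)
definition lturn :: "('d \<Rightarrow> 'd) \<Rightarrow> ('d \<Rightarrow> 'd) \<Rightarrow> 'd \<Rightarrow> 'd \<Rightarrow> nat" where
  "lturn alpha phi e e' = (LEAST k. (rot alpha phi ^^ k) (alpha e) = e')"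

(* number of triangles to the RIGHT *)
definition rturn :: "('d \<Rightarrow> 'd) \<Rightarrow> ('d \<Rightarrow> 'd) \<Rightarrow> 'd \<Rightarrow> 'd \<Rightarrow> nat" where
  "rturn alpha phi e e' = deg (rot alpha phi) (alpha e) - lturn alpha phi e e'"

(* bad turn: 0-turn, 1-turn, -1-turn, 2_r-turn, -2_r-turn;
   the triangle to the left of e has colour col e *)
definition bad_turn :: "('d \<Rightarrow> 'd) \<Rightarrow> ('d \<Rightarrow> 'd) \<Rightarrow> ('d \<Rightarrow> color) \<Rightarrow> 'd \<Rightarrow> 'd \<Rightarrow> bool" where
  "bad_turn alpha phi col e e' \<longleftrightarrow>
     lturn alpha phi e e' = 0 \<or> lturn alpha phi e e' = 1 \<or> rturn alpha phi e e' = 1 \<or>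
     (lturn alpha phi e e' = 2 \<and> col e = Red) \<or> (rturn alpha phi e e' = 2 \<and> col e = Red)"

definition turn_3r :: "('d \<Rightarrow> 'd) \<Rightarrow> ('d \<Rightarrow> 'd) \<Rightarrow> ('d \<Rightarrow> color) \<Rightarrow> 'd \<Rightarrow> 'd \<Rightarrow> bool" where
  "turn_3r alpha phi col e e' \<longleftrightarrow> lturn alpha phi e e' = 3 \<and> col e = Red"

definition turn_m3b :: "('d \<Rightarrow> 'd) \<Rightarrow> ('d \<Rightarrow> 'd) \<Rightarrow> ('d \<Rightarrow> color) \<Rightarrow> 'd \<Rightarrow> 'd \<Rightarrow> bool" where
  "turn_m3b alpha phi col e e' \<longleftrightarrow>
     lturn alpha phi e e' \<noteq> 0 \<and> rturn alpha phi e e' = 3 \<and> col e = Blue"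

definition reduced_closed_walk ::
  "('d \<Rightarrow> 'd) \<Rightarrow> ('d \<Rightarrow> 'd) \<Rightarrow> ('d \<Rightarrow> color) \<Rightarrow> 'd list \<Rightarrow> bool" where
  "reduced_closed_walk alpha phi col ds \<longleftrightarrow> closed_walk alpha phi ds \<and>
     (\<forall>i < length ds. \<not> bad_turn alpha phi col (ds ! i) (ds ! ((i + 1) mod length ds))) \<and>
     \<not> (\<forall>i < length ds. turn_3r alpha phi col (ds ! i) (ds ! ((i + 1) mod length ds))) \<and>
     \<not> (\<forall>i < length ds. turn_m3b alpha phi col (ds ! i) (ds ! ((i + 1) mod length ds)))"

(* C and C' together bound an annulus: there is a finite set F of darts, closed under
   phi (i.e. a finite union of triangles), connected through shared edges, whose
   boundary edges (edges with exactly one side in F) are exactly the edges of C and C',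
   and whose Euler characteristic V - E + F is 0.  (With C, C' simple and disjoint this
   region is a compact orientable surface with two boundary circles; chi = 0 and
   connectedness make it an annulus.) *)
definition bound_annulus :: "('d \<Rightarrow> 'd) \<Rightarrow> ('d \<Rightarrow> 'd) \<Rightarrow> 'd list \<Rightarrow> 'd list \<Rightarrow> bool" where
  "bound_annulus alpha phi C C' \<longleftrightarrow> (\<exists>F. finite F \<and> (\<forall>d\<in>F. phi d \<in> F) \<and>
     (\<forall>x\<in>F. \<forall>y\<in>F. (x, y) \<in> {(a, b). a \<in> F \<and> b \<in> F \<and> (b = phi a \<or> b = alpha a)}\<^sup>*) \<and>
     (\<forall>x. ((x \<in> F) \<longleftrightarrow> (alpha x \<notin> F)) \<longleftrightarrow>
          x \<in> set C \<union> alpha ` set C \<union> set C' \<union> alpha ` set C') \<and>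
     int (card (vtx (rot alpha phi) ` F)) - int (card ((\<lambda>d. {d, alpha d}) ` F))
       + int (card ((\<lambda>d. {d, phi d, phi (phi d)}) ` F)) = 0)"

end

theory Submission
  imports Defs
begin

lemma vtx_period:
  fixes f :: "'a \<Rightarrow> 'a"
  assumes inj: "inj f" and fin: "finite (vtx f d)"
  defines "N \<equiv> card (vtx f d)"
  shows "0 < N \<and> (f ^^ N) d = d \<and> inj_on (\<lambda>j. (f^^j) d) {..<N} \<and>
         vtx f d = (\<lambda>j. (f^^j) d) ` {..<N}"
proof -
  have V: "vtx f d = range (\<lambda>k. (f^^k) d)" unfolding vtx_def by auto
  have "\<not> inj_on (\<lambda>k. (f^^k) d) {..N}"
  proof
    assume "inj_on (\<lambda>k. (f^^k) d) {..N}"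
    from card_inj_on_le[OF this _ fin] V have "card {..N} \<le> N" unfolding N_def by auto
    thus False by simp
  qed
  then obtain i j where ij: "i \<le> N" "j \<le> N" "i \<noteq> j" "(f^^i) d = (f^^j) d"
    unfolding inj_on_def by auto
  have ex: "\<exists>p. 0 < p \<and> (f^^p) d = d"
  proof -
    have gen: "(f^^(b-a)) d = d" if "a < b" "(f^^a) d = (f^^b) d" for a b
    proof -
      have "(f^^a) ((f^^(b-a)) d) = (f^^b) d"
        using that(1) by (metis add_diff_inverse_nat comp_apply funpow_add less_imp_not_less)
      also have "\<dots> = (f^^a) d" using that(2) by simp
      finally show ?thesis using inj_fn[OF inj, of a] by (auto dest: injD)
    qed
    show ?thesis
    proof (cases "i < j")
      case True thus ?thesis using gen[of i j] ij by (intro exI[of _ "j-i"]) auto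
    next
      case False hence "j < i" using ij by auto
      thus ?thesis using gen[of j i] ij by (intro exI[of _ "i-j"]) auto
    qed
  qed
  define p where "p = (LEAST p. 0 < p \<and> (f^^p) d = d)"
  have p: "0 < p" "(f^^p) d = d" using LeastI_ex[OF ex] unfolding p_def by auto
  have pm: "\<not> (f^^q) d = d" if "0 < q" "q < p" for q
    using not_less_Least[of q "\<lambda>p. 0 < p \<and> (f^^p) d = d"] that unfolding p_def by auto
  have mult: "(f^^(p*q)) d = d" for q
  proof (induction q)
    case 0 thus ?case by simp
  next
    case (Suc q)
    have "(f^^(p*Suc q)) d = (f^^p) ((f^^(p*q)) d)"
      by (simp add: funpow_add mult.commute)
    thus ?case using Suc p by simp
  qed
  have md: "(f^^k) d = (f^^(k mod p)) d" for k
  proof -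
    have "(f^^k) d = (f^^(k mod p)) ((f^^(p * (k div p))) d)"
      by (metis comp_apply funpow_add mod_mult_div_eq)
    thus ?thesis using mult by simp
  qed
  have img: "vtx f d = (\<lambda>j. (f^^j) d) ` {..<p}"
  proof
    show "vtx f d \<subseteq> (\<lambda>j. (f^^j) d) ` {..<p}"
    proof
      fix x assume "x \<in> vtx f d"
      then obtain k where "x = (f^^k) d" unfolding V by auto
      hence "x = (f^^(k mod p)) d" using md by simp
      moreover have "k mod p < p" using p(1) by simp
      ultimately show "x \<in> (\<lambda>j. (f^^j) d) ` {..<p}" by blast
    qed
  qed (auto simp: V)
  have inj': "inj_on (\<lambda>j. (f^^j) d) {..<p}"
  proof (rule inj_onI, rule ccontr)
    fix a b assume ab: "a \<in> {..<p}" "b \<in> {..<p}" "(f^^a) d = (f^^b) d" "a \<noteq> b"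
    have gen: "(f^^(b-a)) d = d" if "a < b" "(f^^a) d = (f^^b) d" for a b
    proof -
      have "(f^^a) ((f^^(b-a)) d) = (f^^b) d"
        using that(1) by (metis add_diff_inverse_nat comp_apply funpow_add less_imp_not_less)
      also have "\<dots> = (f^^a) d" using that(2) by simp
      finally show ?thesis using inj_fn[OF inj, of a] by (auto dest: injD)
    qed
    show False
    proof (cases "a < b")
      case True thus False using gen[of a b] ab pm[of "b-a"] by (simp add: less_imp_diff_less)
    next
      case False hence "b < a" using ab by auto
      thus False using gen[of b a] ab pm[of "a-b"] by (simp add: less_imp_diff_less)
    qed
  qed
  have "N = p" unfolding N_def img using card_image[OF inj'] by simp
  thus ?thesis using p img inj' by simp
qed

lemma vtx_self: "d \<in> vtx f d" unfolding vtx_def by (auto intro: exI[of _ 0])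
lemma vtx_pow: "(f^^j) d \<in> vtx f d" unfolding vtx_def by auto
lemma vtx_sub: assumes "x \<in> vtx f d" shows "vtx f x \<subseteq> vtx f d"
proof
  fix y assume "y \<in> vtx f x"
  then obtain j where "y = (f^^j) x" unfolding vtx_def by auto
  moreover obtain k where "x = (f^^k) d" using assms unfolding vtx_def by auto
  ultimately have "y = (f^^(j+k)) d" by (simp add: funpow_add)
  thus "y \<in> vtx f d" unfolding vtx_def by auto
qed

locale RT =
  fixes \<alpha> \<phi> :: "'d \<Rightarrow> 'd" and col :: "'d \<Rightarrow> color" and F Bd :: "'d set"
  assumes ai: "\<And>d. \<alpha> (\<alpha> d) = d" and anf: "\<And>d. \<alpha> d \<noteq> d"
  and p3: "\<And>d. \<phi> (\<phi> (\<phi> d)) = d" and pnf: "\<And>d. \<phi> d \<noteq> d"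
  and fin: "\<And>d. finite (vtx (rot \<alpha> \<phi>) d)" and dg: "\<And>d. 8 \<le> deg (rot \<alpha> \<phi>) d"
  and cp: "\<And>d. col (\<phi> d) = col d" and ca: "\<And>d. col (\<alpha> d) \<noteq> col d"
  and Ffin: "finite F" and Fcl: "\<And>d. d \<in> F \<Longrightarrow> \<phi> d \<in> F"
  and BdF: "\<And>x. x \<in> Bd \<longleftrightarrow> (x \<in> F \<longleftrightarrow> \<alpha> x \<notin> F)"
begin

abbreviation s where "s \<equiv> rot \<alpha> \<phi>"

lemma s_apply: "s x = \<phi> (\<alpha> x)" by (simp add: rot_def)

definition t where "t x = \<alpha> (\<phi> (\<phi> x))"
lemma st: "s (t x) = x" by (simp add: s_apply t_def ai p3)
lemma ts: "t (s x) = x" by (simp add: s_apply t_def ai p3)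
lemma inj_s: "inj s" by (rule inj_on_inverseI[where g=t]) (rule ts)

lemma Fphi: "\<phi> x \<in> F \<longleftrightarrow> x \<in> F"
proof
  assume "\<phi> x \<in> F" hence "\<phi> (\<phi> (\<phi> x)) \<in> F" using Fcl by blast
  thus "x \<in> F" using p3 by simp
qed (rule Fcl)
lemma sF: "s x \<in> F \<longleftrightarrow> \<alpha> x \<in> F" by (simp add: s_apply Fphi)
lemma Bd_alpha: "\<alpha> x \<in> Bd \<longleftrightarrow> x \<in> Bd"
proof -
  have "\<alpha> x \<in> Bd \<longleftrightarrow> (\<alpha> x \<in> F \<longleftrightarrow> x \<notin> F)" using BdF[of "\<alpha> x"] ai by simp
  thus ?thesis using BdF[of x] by blast
qed
lemma notBd_F: "x \<notin> Bd \<Longrightarrow> (\<alpha> x \<in> F \<longleftrightarrow> x \<in> F)" using BdF by blast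
lemma Bd_F: "x \<in> Bd \<Longrightarrow> (\<alpha> x \<in> F \<longleftrightarrow> x \<notin> F)" using BdF by blast

lemma col_other: "col x \<noteq> col y \<Longrightarrow> col y \<noteq> col z \<Longrightarrow> col x = col z"
  by (cases "col x"; cases "col y"; cases "col z") auto
lemma col_s: "col (s x) \<noteq> col x" by (simp add: s_apply cp ca)
lemma col_pow: "col ((s^^j) x) = (if even j then col x else col (s x))"
proof (induction j)
  case 0 thus ?case by simp
next
  case (Suc j)
  have "col ((s^^Suc j) x) \<noteq> col ((s^^j) x)" using col_s by simp
  thus ?case using Suc col_s[of x]
    by (cases "col ((s^^Suc j) x)"; cases "col ((s^^j) x)"; cases "col x"; cases "col (s x)") (auto split: if_splits)
qed
lemma col_phi2: "col (\<phi> (\<phi> x)) = col x" by (simp add: cp)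

lemma per: "(s ^^ deg s d) d = d" and injd: "inj_on (\<lambda>j. (s^^j) d) {..<deg s d}"
  and vtxim: "vtx s d = (\<lambda>j. (s^^j) d) ` {..<deg s d}"
  using vtx_period[OF inj_s fin, of d] unfolding deg_def by auto

lemma deg_pos: "0 < deg s d" using dg[of d] by simp

lemma powmod: "(s^^k) d = (s^^(k mod deg s d)) d"
proof -
  have m: "(s^^(deg s d * q)) d = d" for q
  proof (induction q)
    case 0 thus ?case by simp
  next
    case (Suc q)
    have "(s^^(deg s d * Suc q)) d = (s^^deg s d) ((s^^(deg s d * q)) d)"
      by (simp add: funpow_add mult.commute)
    thus ?case using Suc per by simp
  qed
  have "(s^^k) d = (s^^(k mod deg s d)) ((s^^(deg s d * (k div deg s d))) d)"
    by (metis comp_apply funpow_add mod_mult_div_eq)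
  thus ?thesis using m by simp
qed

lemma vtx_same: assumes "x \<in> vtx s d" shows "vtx s x = vtx s d"
proof
  show "vtx s x \<subseteq> vtx s d" using vtx_sub[OF assms] .
  obtain k where k: "x = (s^^k) d" using assms unfolding vtx_def by auto
  let ?n = "deg s d"
  have "(s^^(?n - k mod ?n)) x = (s^^((?n - k mod ?n) + k mod ?n)) d"
    by (simp add: k funpow_add powmod[of k d])
  also have "(?n - k mod ?n) + k mod ?n = ?n" using deg_pos[of d] by simp
  finally have "(s^^(?n - k mod ?n)) x = d" using per[of d] by simp
  hence "d \<in> vtx s x" unfolding vtx_def by (metis (mono_tags) mem_Collect_eq)
  thus "vtx s d \<subseteq> vtx s x" by (rule vtx_sub)
qed

lemma vtx_eq_iff: "vtx s x = vtx s d \<longleftrightarrow> x \<in> vtx s d"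
  using vtx_same[of x d] vtx_self[where f=s and d=x] by blast

lemma deg_same: "x \<in> vtx s d \<Longrightarrow> deg s x = deg s d"
  unfolding deg_def using vtx_same by simp

lemma even_deg: "even (deg s d)"
proof (rule ccontr)
  assume "odd (deg s d)"
  hence "col ((s^^deg s d) d) = col (s d)" using col_pow by simp
  thus False using per[of d] col_s[of d] by simp
qed

lemma pow_inj: "i < deg s d \<Longrightarrow> j < deg s d \<Longrightarrow> (s^^i) d = (s^^j) d \<Longrightarrow> i = j"
  using injd[of d] unfolding inj_on_def by auto

lemma PL: "(\<And>j. 0 < j \<Longrightarrow> j < q \<Longrightarrow> (s^^j) y \<notin> Bd) \<Longrightarrow> 0 < q \<Longrightarrow> ((s^^q) y \<in> F \<longleftrightarrow> s y \<in> F)"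
proof (induction q)
  case 0 thus ?case by simp
next
  case (Suc q)
  show ?case
  proof (cases "q = 0")
    case True thus ?thesis by simp
  next
    case False
    have nb: "(s^^q) y \<notin> Bd" using Suc.prems(1)[of q] False by simp
    have "(s^^Suc q) y \<in> F \<longleftrightarrow> (s^^q) y \<in> F" using sF notBd_F[OF nb] by simp
    also have "\<dots> \<longleftrightarrow> s y \<in> F" using Suc False by simp
    finally show ?thesis .
  qed
qed

definition bv where "bv a m \<longleftrightarrow> a \<in> Bd \<and> a \<notin> F \<and> 2 \<le> m \<and> m < deg s a \<and>
   Bd \<inter> vtx s a = {a, (s^^m) a} \<and> (m = 2 \<longrightarrow> col (s a) = Blue)"

lemma bv_nb: assumes "bv a m" "0 < j" "j < deg s a" "j \<noteq> m" shows "(s^^j) a \<notin> Bd"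
proof
  assume "(s^^j) a \<in> Bd"
  hence "(s^^j) a \<in> {a, (s^^m) a}" using assms(1) vtx_pow[where f=s and d=a and j=j] unfolding bv_def by blast
  hence "(s^^j) a = (s^^0) a \<or> (s^^j) a = (s^^m) a" by auto
  thus False using pow_inj[of j a 0] pow_inj[of j a m] assms unfolding bv_def by auto
qed

lemma bv_F: assumes "bv a m" "j < deg s a" shows "(s^^j) a \<in> F \<longleftrightarrow> 0 < j \<and> j \<le> m"
proof -
  have a: "a \<in> Bd" "a \<notin> F" "2 \<le> m" "m < deg s a" using assms unfolding bv_def by auto
  have s1: "s a \<in> F" using sF Bd_F[OF a(1)] a(2) by simp
  have low: "(s^^j) a \<in> F" if "0 < j" "j \<le> m" for j
    using PL[of j a] bv_nb[OF assms(1)] that a s1 by simp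
  have mb: "(s^^m) a \<in> Bd" using assms(1) unfolding bv_def by blast
  have mF: "(s^^m) a \<in> F" using low a by simp
  have high: "(s^^j) a \<notin> F" if "m < j" "j < deg s a" for j
  proof -
    have "(s^^(j-m)) ((s^^m) a) = (s^^((j-m)+m)) a" by (simp add: funpow_add)
    also have "(j-m)+m = j" using that by simp
    finally have "(s^^(j-m)) ((s^^m) a) = (s^^j) a" .
    moreover have "(s^^(j-m)) ((s^^m) a) \<in> F \<longleftrightarrow> s ((s^^m) a) \<in> F"
    proof (rule PL)
      fix i assume "0 < i" "i < j - m"
      hence "(s^^i) ((s^^m) a) = (s^^(i+m)) a" by (simp add: funpow_add)
      thus "(s^^i) ((s^^m) a) \<notin> Bd" using bv_nb[OF assms(1), of "i+m"] \<open>0<i\<close> \<open>i < j-m\<close> that by auto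
    qed (use that in auto)
    moreover have "s ((s^^m) a) \<notin> F" using sF Bd_F[OF mb] mF by simp
    ultimately show ?thesis by simp
  qed
  show ?thesis
  proof (cases "0<j \<and> j \<le> m")
    case True thus ?thesis using low by simp
  next
    case False
    then have "j = 0 \<or> m < j" by auto
    thus ?thesis using high assms(2) a(2) False by auto
  qed
qed


lemma bv_mF: assumes "bv a m" shows "(s^^m) a \<in> F \<inter> Bd"
  using bv_F[OF assms, of m] assms unfolding bv_def by auto

definition w :: "'d \<Rightarrow> int" where
  "w x = (if x \<in> Bd then 4 else if col x = Blue then 2 else 0)"
definition S where "S X = sum w {x. x \<in> F \<and> vtx s x = X}"

lemma w_nonneg: "0 \<le> w x" unfolding w_def by auto

lemma bv_fiber: assumes "bv a m"
  shows "{x. x \<in> F \<and> vtx s x = vtx s a} = (\<lambda>j. (s^^j) a) ` {1..m}"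
    and "inj_on (\<lambda>j. (s^^j) a) {1..m}"
proof -
  have m: "m < deg s a" using assms unfolding bv_def by auto
  show "{x. x \<in> F \<and> vtx s x = vtx s a} = (\<lambda>j. (s^^j) a) ` {1..m}"
  proof
    show "{x. x \<in> F \<and> vtx s x = vtx s a} \<subseteq> (\<lambda>j. (s^^j) a) ` {1..m}"
    proof
      fix x assume x: "x \<in> {x. x \<in> F \<and> vtx s x = vtx s a}"
      hence "x \<in> vtx s a" using vtx_eq_iff by auto
      then obtain j where j: "j < deg s a" "x = (s^^j) a" using vtxim[of a] by auto
      hence "0 < j \<and> j \<le> m" using bv_F[OF assms j(1)] x by auto
      thus "x \<in> (\<lambda>j. (s^^j) a) ` {1..m}" using j by auto
    qed
    show "(\<lambda>j. (s^^j) a) ` {1..m} \<subseteq> {x. x \<in> F \<and> vtx s x = vtx s a}"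
    proof
      fix x assume "x \<in> (\<lambda>j. (s^^j) a) ` {1..m}"
      then obtain j where j: "1 \<le> j" "j \<le> m" "x = (s^^j) a" by auto
      have "x \<in> F" using bv_F[OF assms, of j] j m by auto
      moreover have "vtx s x = vtx s a" using j(3) vtx_same vtx_pow by metis
      ultimately show "x \<in> {x. x \<in> F \<and> vtx s x = vtx s a}" by simp
    qed
  qed
  show "inj_on (\<lambda>j. (s^^j) a) {1..m}"
    by (rule inj_on_subset[OF injd[of a]]) (use m in auto)
qed

lemma bv_card: assumes "bv a m" shows "card {x. x \<in> F \<and> vtx s x = vtx s a} = m"
  using bv_fiber[OF assms] card_image by fastforce

lemma bv_S: assumes "bv a m"
  shows "S (vtx s a) = 4 + (\<Sum>j\<in>{1..<m}. w ((s^^j) a))"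
proof -
  have m: "2 \<le> m" "m < deg s a" and mb: "(s^^m) a \<in> Bd" using assms unfolding bv_def by auto
  have "S (vtx s a) = (\<Sum>j\<in>{1..m}. w ((s^^j) a))"
    unfolding S_def bv_fiber(1)[OF assms] using sum.reindex[OF bv_fiber(2)[OF assms]] by simp
  also have "{1..m} = insert m {1..<m}" using m by auto
  also have "(\<Sum>j\<in>insert m {1..<m}. w ((s^^j) a)) = w ((s^^m) a) + (\<Sum>j\<in>{1..<m}. w ((s^^j) a))"
    by (rule sum.insert) auto
  finally show ?thesis using mb unfolding w_def by simp
qed

lemma bv_w: assumes "bv a m" "0 < j" "j < m"
  shows "w ((s^^j) a) = (if col ((s^^j) a) = Blue then 2 else 0)"
  using bv_nb[OF assms(1), of j] assms unfolding bv_def w_def by auto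

lemma bv_S_ge: assumes "bv a m"
  shows "6 \<le> S (vtx s a)" and "S (vtx s a) = 6 \<Longrightarrow> m \<le> 4 \<and> (m = 4 \<longrightarrow> col (s a) = Red)"
proof -
  have m: "2 \<le> m" and m2: "m = 2 \<longrightarrow> col (s a) = Blue" using assms unfolding bv_def by auto
  define g where "g j = w ((s^^j) a)" for j
  have gc: "g j = (if (if even j then col a else col (s a)) = Blue then 2 else 0)" if "0 < j" "j < m" for j
    using bv_w[OF assms that] col_pow[of j a] unfolding g_def by simp
  have ca: "col a \<noteq> col (s a)" using col_s[of a] by simp
  have g0: "0 \<le> g j" for j unfolding g_def by (rule w_nonneg)
  have S: "S (vtx s a) = 4 + sum g {1..<m}" using bv_S[OF assms] unfolding g_def by simp
  have sub: "sum g A \<le> sum g {1..<m}" if "A \<subseteq> {1..<m}" for A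
    by (rule sum_mono2) (use that g0 in auto)
  have two: "2 \<le> sum g {1..<m}"
  proof (cases "m = 2")
    case True
    hence "{1..<m} = {1}" by auto
    thus ?thesis using gc[of 1] m2 True by simp
  next
    case False
    hence "{1,2} \<subseteq> {1..<m}" using m by auto
    hence "sum g {1,2} \<le> sum g {1..<m}" by (rule sub)
    moreover have "sum g {1,2} = g 1 + g 2" by simp
    moreover have "g 1 + g 2 = 2" using gc[of 1] gc[of 2] False m ca
      by (cases "col a"; cases "col (s a)") auto
    ultimately show ?thesis by simp
  qed
  show "6 \<le> S (vtx s a)" using S two by simp
  assume S6: "S (vtx s a) = 6"
  have "m \<le> 4"
  proof (rule ccontr)
    assume "\<not> m \<le> 4"
    hence "{1,2,3,4} \<subseteq> {1..<m}" by auto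
    hence "sum g {1,2,3,4} \<le> sum g {1..<m}" by (rule sub)
    moreover have "sum g {1,2,3,4} = g 1 + g 2 + g 3 + g 4" by simp
    moreover have "g 1 + g 2 + g 3 + g 4 = 4" using gc[of 1] gc[of 2] gc[of 3] gc[of 4] \<open>\<not> m \<le> 4\<close> ca
      by (cases "col a"; cases "col (s a)") auto
    ultimately show False using S S6 by simp
  qed
  moreover have "col (s a) = Red" if "m = 4"
  proof (rule ccontr)
    assume "col (s a) \<noteq> Red"
    hence b: "col (s a) = Blue" by (cases "col (s a)") auto
    have "{1,3} \<subseteq> {1..<m}" using that by auto
    hence "sum g {1,3} \<le> sum g {1..<m}" by (rule sub)
    moreover have "sum g {1,3} = g 1 + g 3" by simp
    moreover have "g 1 + g 3 = 4" using gc[of 1] gc[of 3] that b by simp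
    ultimately show False using S S6 by simp
  qed
  ultimately show "m \<le> 4 \<and> (m = 4 \<longrightarrow> col (s a) = Red)" by simp
qed

lemma interior_fiber: assumes "d \<in> F" "Bd \<inter> vtx s d = {}"
  shows "{x. x \<in> F \<and> vtx s x = vtx s d} = vtx s d"
proof -
  have "(s^^j) d \<in> F" for j
  proof (induction j)
    case 0 thus ?case using assms by simp
  next
    case (Suc j)
    have "(s^^j) d \<notin> Bd" using assms(2) vtx_pow[where f=s and d=d and j=j] by blast
    thus ?case using Suc sF notBd_F by simp
  qed
  hence "vtx s d \<subseteq> F" unfolding vtx_def by auto
  thus ?thesis using vtx_eq_iff by auto
qed

lemma interior_S: assumes "d \<in> F" "Bd \<inter> vtx s d = {}" shows "8 \<le> S (vtx s d)"
proof -
  have S: "S (vtx s d) = sum w (vtx s d)" unfolding S_def interior_fiber[OF assms] ..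
  have sub: "(\<lambda>j. (s^^j) d) ` {..<8} \<subseteq> vtx s d" using vtx_pow by auto
  have inj8: "inj_on (\<lambda>j. (s^^j) d) {..<8}"
    using inj_on_subset[OF injd[of d]] dg[of d] by auto
  have "sum w ((\<lambda>j. (s^^j) d) ` {..<8}) \<le> sum w (vtx s d)"
    by (rule sum_mono2[OF fin sub]) (simp add: w_nonneg)
  moreover have "sum w ((\<lambda>j. (s^^j) d) ` {..<8}) = (\<Sum>j<8. w ((s^^j) d))"
    using sum.reindex[OF inj8] by simp
  moreover have "w ((s^^j) d) = (if (if even j then col d else col (s d)) = Blue then 2 else 0)" for j
  proof -
    have "(s^^j) d \<notin> Bd" using assms(2) vtx_pow[where f=s and d=d and j=j] by blast
    thus ?thesis unfolding w_def using col_pow[of j d] by simp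
  qed
  moreover have "{..<8::nat} = {0,1,2,3,4,5,6,7}" by auto
  moreover have "col d \<noteq> col (s d)" using col_s[of d] by simp
  ultimately show ?thesis using S by (cases "col d"; cases "col (s d)") auto
qed


definition tri where "tri d = {d, \<phi> d, \<phi> (\<phi> d)}"
definition edge where "edge d = {d, \<alpha> d}"

lemma tri_eq: "x \<in> tri d \<Longrightarrow> tri x = tri d"
  unfolding tri_def using p3 by auto
lemma tri_self: "x \<in> tri x" unfolding tri_def by simp
lemma tri_card: "card (tri d) = 3"
proof -
  have a: "\<phi> d \<noteq> d" using pnf .
  have b: "\<phi> (\<phi> d) \<noteq> \<phi> d" using pnf .
  have c: "\<phi> (\<phi> d) \<noteq> d"
  proof
    assume "\<phi> (\<phi> d) = d"
    hence "\<phi> (\<phi> (\<phi> d)) = \<phi> d" by simp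
    thus False using p3 a by simp
  qed
  show ?thesis unfolding tri_def using a b c by auto
qed
lemma tri_F: "d \<in> F \<Longrightarrow> tri d \<subseteq> F" unfolding tri_def using Fcl by auto
lemma tri_col: "x \<in> tri d \<Longrightarrow> col x = col d" unfolding tri_def using cp by auto

lemma card_F_tri: "card F = 3 * card (tri ` F)"
proof -
  have "card F = sum (\<lambda>_. 1::nat) F" by simp
  also have "\<dots> = sum (\<lambda>Y. sum (\<lambda>_. 1::nat) {x. x \<in> F \<and> tri x = Y}) (tri ` F)"
    by (rule sum.image_gen[OF Ffin])
  also have "\<dots> = sum (\<lambda>Y. 3) (tri ` F)"
  proof (rule sum.cong[OF refl])
    fix Y assume "Y \<in> tri ` F"
    then obtain d where d: "d \<in> F" "Y = tri d" by auto
    have "{x. x \<in> F \<and> tri x = Y} = tri d"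
      using d tri_F[OF d(1)] tri_eq tri_self by blast
    thus "sum (\<lambda>_. 1::nat) {x. x \<in> F \<and> tri x = Y} = 3" using tri_card[of d] by simp
  qed
  finally show ?thesis by simp
qed

lemma card_F_edge: "2 * card (edge ` F) = card F + card (F \<inter> Bd)"
proof -
  define g where "g x = (if x \<in> Bd then 2 else 1::nat)" for x
  have "sum g F = sum g (F \<inter> Bd) + sum g (F - Bd)" by (rule sum.Int_Diff[OF Ffin])
  also have "\<dots> = 2 * card (F \<inter> Bd) + card (F - Bd)" unfolding g_def by simp
  also have "card F = card (F \<inter> Bd) + card (F - Bd)"
    using card_Int_Diff[OF Ffin] by blast
  hence "2 * card (F \<inter> Bd) + card (F - Bd) = card F + card (F \<inter> Bd)" by simp
  finally have A: "sum g F = card F + card (F \<inter> Bd)" .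
  have "sum g F = sum (\<lambda>Y. sum g {x. x \<in> F \<and> edge x = Y}) (edge ` F)"
    by (rule sum.image_gen[OF Ffin])
  also have "\<dots> = sum (\<lambda>Y. 2) (edge ` F)"
  proof (rule sum.cong[OF refl])
    fix Y assume "Y \<in> edge ` F"
    then obtain d where d: "d \<in> F" "Y = edge d" by auto
    have fib: "{x. x \<in> F \<and> edge x = Y} = F \<inter> {d, \<alpha> d}"
    proof -
      have "edge x = edge d \<longleftrightarrow> x = d \<or> x = \<alpha> d" for x
        unfolding edge_def using ai anf by (auto simp: doubleton_eq_iff)
      thus ?thesis using d by auto
    qed
    show "sum g {x. x \<in> F \<and> edge x = Y} = 2"
    proof (cases "d \<in> Bd")
      case True
      hence "\<alpha> d \<notin> F" using Bd_F d by simp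
      hence "F \<inter> {d, \<alpha> d} = {d}" using d by auto
      thus ?thesis using fib True unfolding g_def by simp
    next
      case False
      hence "\<alpha> d \<in> F" using notBd_F d by simp
      hence "F \<inter> {d, \<alpha> d} = {d, \<alpha> d}" using d by auto
      moreover have "\<alpha> d \<notin> Bd" using False Bd_alpha by simp
      ultimately show ?thesis using fib False anf[of d] unfolding g_def by simp
    qed
  qed
  finally show ?thesis using A by simp
qed

lemma color_balance: "(\<Sum>x\<in>F - Bd. (if col x = Blue then 1 else -1 :: int)) = 0"
proof -
  define c where "c x = (if col x = Blue then 1 else -1 :: int)" for x
  have bij: "bij_betw \<alpha> (F - Bd) (F - Bd)"
  proof (rule bij_betw_imageI)
    show "inj_on \<alpha> (F - Bd)" by (metis ai inj_on_inverseI)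
    show "\<alpha> ` (F - Bd) = F - Bd"
    proof
      show "\<alpha> ` (F - Bd) \<subseteq> F - Bd" using notBd_F Bd_alpha by auto
      show "F - Bd \<subseteq> \<alpha> ` (F - Bd)"
      proof
        fix x assume x: "x \<in> F - Bd"
        have "\<alpha> x \<in> F - Bd" using x notBd_F Bd_alpha by auto
        thus "x \<in> \<alpha> ` (F - Bd)" using ai[of x] by (metis image_eqI)
      qed
    qed
  qed
  have "sum (\<lambda>x. c (\<alpha> x)) (F - Bd) = sum c (F - Bd)" by (rule sum.reindex_bij_betw[OF bij])
  moreover have "c (\<alpha> x) = - c x" for x unfolding c_def using ca[of x]
    by (cases "col x"; cases "col (\<alpha> x)") auto
  ultimately have "sum c (F - Bd) = - sum c (F - Bd)" by (simp add: sum_negf)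
  thus ?thesis unfolding c_def by simp
qed

lemma sum_w: "sum w F = 4 * int (card (F \<inter> Bd)) + int (card (F - Bd))"
proof -
  have "sum w F = sum w (F \<inter> Bd) + sum w (F - Bd)" by (rule sum.Int_Diff[OF Ffin])
  also have "sum w (F \<inter> Bd) = 4 * int (card (F \<inter> Bd))" unfolding w_def by simp
  also have "sum w (F - Bd) = (\<Sum>x\<in>F - Bd. 1 + (if col x = Blue then 1 else -1 :: int))"
    by (rule sum.cong) (auto simp: w_def)
  also have "\<dots> = int (card (F - Bd))" using color_balance by (simp add: sum.distrib)
  finally show ?thesis .
qed

lemma S_total:
  assumes eu: "int (card (vtx s ` F)) - int (card (edge ` F)) + int (card (tri ` F)) = 0"
  shows "sum S (vtx s ` F) = 6 * int (card (vtx s ` F))"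
proof -
  have "sum S (vtx s ` F) = sum w F" unfolding S_def by (rule sum.image_gen[OF Ffin, symmetric])
  also have "\<dots> = 4 * int (card (F \<inter> Bd)) + int (card (F - Bd))" by (rule sum_w)
  also have "\<dots> = 6 * int (card (vtx s ` F))"
  proof -
    have 1: "card F = card (F \<inter> Bd) + card (F - Bd)" using card_Int_Diff[OF Ffin] by blast
    have 2: "2 * int (card (edge ` F)) = int (card F) + int (card (F \<inter> Bd))"
      using card_F_edge by linarith
    have 3: "int (card F) = 3 * int (card (tri ` F))" using card_F_tri by simp
    show ?thesis using 1 2 3 eu by linarith
  qed
  finally show ?thesis .
qed


end

locale RT1 = RT +
  assumes IL: "\<And>d. d \<in> F \<Longrightarrow> Bd \<inter> vtx (rot \<alpha> \<phi>) d \<noteq> {} \<Longrightarrow>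
      \<exists>a m. bv a m \<and> vtx (rot \<alpha> \<phi>) a = vtx (rot \<alpha> \<phi>) d"
  and eu: "int (card (vtx (rot \<alpha> \<phi>) ` F)) - int (card (edge ` F)) + int (card (tri ` F)) = 0"
begin

lemma bv_in: assumes "bv a m" shows "vtx s a \<in> vtx s ` F"
proof -
  have "s a \<in> F" using bv_F[OF assms, of 1] assms unfolding bv_def by auto
  moreover have "vtx s (s a) = vtx s a" using vtx_same vtx_pow[where f=s and d=a and j=1] by simp
  ultimately show ?thesis by (metis image_eqI)
qed

lemma S_ge6: assumes "X \<in> vtx s ` F" shows "6 \<le> S X"
proof -
  obtain d where d: "d \<in> F" "X = vtx s d" using assms by auto
  show ?thesis
  proof (cases "Bd \<inter> vtx s d = {}")
    case True thus ?thesis using interior_S[OF d(1) True] d by simp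
  next
    case False
    then obtain a m where am: "bv a m" "vtx s a = vtx s d" using IL[OF d(1)] by blast
    have "6 \<le> S (vtx s a)" by (rule bv_S_ge(1)[OF am(1)])
    thus ?thesis using d am(2) by simp
  qed
qed

lemma all6: assumes "X \<in> vtx s ` F" shows "S X = 6"
proof -
  have fin: "finite (vtx s ` F)" using Ffin by simp
  have "sum (\<lambda>X. S X - 6) (vtx s ` F) = 0" using S_total[OF eu] by (simp add: sum_subtractf)
  moreover have "\<forall>X\<in>vtx s ` F. 0 \<le> S X - 6" using S_ge6 by simp
  moreover have "(\<Sum>X\<in>vtx s ` F. S X - 6) = 0 \<longleftrightarrow> (\<forall>X\<in>vtx s ` F. S X - 6 = 0)"
    by (rule sum_nonneg_eq_0_iff[OF fin]) (use S_ge6 in simp)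
  ultimately have "\<forall>X\<in>vtx s ` F. S X - 6 = 0" by simp
  thus ?thesis using assms by auto
qed

lemma rep: assumes "d \<in> F" shows "\<exists>a m. bv a m \<and> vtx s a = vtx s d"
proof (cases "Bd \<inter> vtx s d = {}")
  case True
  have "8 \<le> S (vtx s d)" using interior_S[OF assms True] .
  moreover have "S (vtx s d) = 6" using all6 assms by simp
  ultimately show ?thesis by simp
next
  case False thus ?thesis using IL[OF assms] by blast
qed

lemma bv_le4: assumes "bv a m" shows "m \<le> 4 \<and> (m = 4 \<longrightarrow> col (s a) = Red)"
  using bv_S_ge(2)[OF assms] all6[OF bv_in[OF assms]] by simp


lemma bv_uniq: assumes "bv a m" "x \<in> Bd" "x \<in> vtx s a"
  shows "x \<notin> F \<Longrightarrow> x = a" and "x \<in> F \<Longrightarrow> x = (s^^m) a"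
proof -
  have x: "x \<in> {a, (s^^m) a}" using assms unfolding bv_def by blast
  have "a \<notin> F" using assms(1) unfolding bv_def by simp
  moreover have "(s^^m) a \<in> F" using bv_mF[OF assms(1)] by simp
  ultimately show "x \<notin> F \<Longrightarrow> x = a" and "x \<in> F \<Longrightarrow> x = (s^^m) a" using x by auto
qed

lemma card_BdF: "card (F \<inter> Bd) = card (vtx s ` F)"
proof -
  have "bij_betw (vtx s) (F \<inter> Bd) (vtx s ` F)"
  proof (rule bij_betw_imageI)
    show "inj_on (vtx s) (F \<inter> Bd)"
    proof (rule inj_onI)
      fix b1 b2 assume b: "b1 \<in> F \<inter> Bd" "b2 \<in> F \<inter> Bd" "vtx s b1 = vtx s b2"
      obtain a m where am: "bv a m" "vtx s a = vtx s b1" using rep b by blast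
      have "b1 \<in> vtx s a" using am(2) vtx_self[where f=s and d=b1] by simp
      moreover have "b2 \<in> vtx s a" using am(2) b(3) vtx_self[where f=s and d=b2] by simp
      ultimately show "b1 = b2" using bv_uniq(2)[OF am(1)] b by auto
    qed
    show "vtx s ` (F \<inter> Bd) = vtx s ` F"
    proof
      show "vtx s ` (F \<inter> Bd) \<subseteq> vtx s ` F" by auto
      show "vtx s ` F \<subseteq> vtx s ` (F \<inter> Bd)"
      proof
        fix X assume "X \<in> vtx s ` F"
        then obtain d where d: "d \<in> F" "X = vtx s d" by auto
        obtain a m where am: "bv a m" "vtx s a = vtx s d" using rep d by blast
        have "vtx s ((s^^m) a) = vtx s a" using vtx_same vtx_pow by metis
        thus "X \<in> vtx s ` (F \<inter> Bd)" using bv_mF[OF am(1)] am d by (metis image_eqI)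
      qed
    qed
  qed
  thus ?thesis by (rule bij_betw_same_card)
qed

lemma card_F3: "card F = 3 * card (vtx s ` F)"
proof -
  have "sum w F = 6 * int (card (vtx s ` F))"
    using S_total[OF eu] sum.image_gen[OF Ffin, of w "vtx s"] unfolding S_def by simp
  moreover have 1: "card F = card (F \<inter> Bd) + card (F - Bd)" using card_Int_Diff[OF Ffin] by blast
  ultimately show ?thesis using sum_w card_BdF by linarith
qed

lemma card_tri: "card (tri ` F) = card (vtx s ` F)"
  using card_F3 card_F_tri by simp

lemma no_phi_pair: assumes "b1 \<in> F \<inter> Bd" "b2 \<in> F \<inter> Bd" shows "b2 \<noteq> \<phi> b1"
proof
  assume b2: "b2 = \<phi> b1"
  have c: "\<alpha> b1 \<in> Bd" "\<alpha> b1 \<notin> F" using assms(1) Bd_alpha Bd_F by auto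
  have sc: "s (\<alpha> b1) = b2" using b2 by (simp add: s_apply ai)
  obtain a m where am: "bv a m" "vtx s a = vtx s b2" using rep assms(2) by blast
  have "b2 \<in> vtx s (\<alpha> b1)" using sc vtx_pow[where f=s and d="\<alpha> b1" and j=1] by simp
  hence "vtx s (\<alpha> b1) = vtx s a" using am vtx_same by simp
  hence ca: "\<alpha> b1 \<in> vtx s a" using vtx_self[where f=s] by metis
  have "b2 \<in> vtx s a" using am vtx_self[where f=s] by metis
  hence "b2 = (s^^m) a" using bv_uniq(2)[OF am(1)] assms(2) by auto
  moreover have "\<alpha> b1 = a" using bv_uniq(1)[OF am(1) c(1) ca c(2)] .
  ultimately have "(s^^1) a = (s^^m) a" using sc by simp
  moreover have "m < deg s a" "2 \<le> m" using am(1) unfolding bv_def by auto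
  ultimately show False using pow_inj[of 1 a m] by simp
qed

lemma tri_inj: "inj_on tri (F \<inter> Bd)"
proof (rule inj_onI)
  fix b1 b2 assume b: "b1 \<in> F \<inter> Bd" "b2 \<in> F \<inter> Bd" "tri b1 = tri b2"
  hence "b2 \<in> tri b1" using tri_self by metis
  hence "b2 = b1 \<or> b2 = \<phi> b1 \<or> b2 = \<phi> (\<phi> b1)" unfolding tri_def by auto
  moreover have "b2 = \<phi> (\<phi> b1) \<Longrightarrow> b1 = \<phi> b2" using p3 by simp
  ultimately show "b1 = b2" using no_phi_pair[OF b(1) b(2)] no_phi_pair[OF b(2) b(1)] by auto
qed

lemma tri_has_bd: assumes "d \<in> F" shows "\<exists>b \<in> F \<inter> Bd. b \<in> tri d"
proof -
  have sub: "tri ` (F \<inter> Bd) \<subseteq> tri ` F" by auto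
  have "card (tri ` (F \<inter> Bd)) = card (F \<inter> Bd)" using card_image[OF tri_inj] .
  also have "\<dots> = card (tri ` F)" using card_BdF card_tri by simp
  finally have "tri ` (F \<inter> Bd) = tri ` F" using card_subset_eq[OF _ sub] Ffin by simp
  hence "tri d \<in> tri ` (F \<inter> Bd)" using assms by auto
  then obtain b where "b \<in> F \<inter> Bd" "tri d = tri b" by auto
  thus ?thesis using tri_self by metis
qed

lemma no4: assumes "bv a m" shows "m \<noteq> 4"
proof
  assume m4: "m = 4"
  have red: "col (s a) = Red" using bv_le4[OF assms] m4 by simp
  define x where "x = (s^^2) a"
  have xF: "x \<in> F" unfolding x_def using bv_F[OF assms, of 2] assms m4 unfolding bv_def by auto
  have xB: "x \<notin> Bd" unfolding x_def using bv_nb[OF assms, of 2] assms m4 unfolding bv_def by auto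
  have xcol: "col x = Blue" unfolding x_def using col_pow[of 2 a] col_s[of a] red
    by (cases "col a") auto
  have saB: "s a \<notin> Bd" using bv_nb[OF assms, of 1] assms m4 unfolding bv_def by auto
  define y where "y = s x"
  have y3: "y = (s^^3) a" unfolding y_def x_def by (simp add: numeral_3_eq_3 numeral_2_eq_2)
  have yF: "y \<in> F" using bv_F[OF assms, of 3] assms m4 y3 unfolding bv_def by auto
  have yB: "y \<notin> Bd" using bv_nb[OF assms, of 3] assms m4 y3 unfolding bv_def by auto
  obtain b where b: "b \<in> F \<inter> Bd" "b \<in> tri x" using tri_has_bd[OF xF] by blast
  have "\<phi> (\<phi> x) = \<alpha> (s a)"
  proof -
    have "x = s (s a)" unfolding x_def by (simp add: numeral_2_eq_2)
    hence "t x = s a" using ts by simp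
    thus ?thesis unfolding t_def using ai by metis
  qed
  hence "\<phi> (\<phi> x) \<notin> Bd" using saB Bd_alpha by simp
  hence pxB: "\<phi> x \<in> F \<inter> Bd" using b xB unfolding tri_def by auto
  obtain b' where b': "b' \<in> F \<inter> Bd" "b' \<in> tri y" using tri_has_bd[OF yF] by blast
  have ppy: "\<phi> (\<phi> y) = \<alpha> x" unfolding y_def by (simp add: s_apply p3)
  hence "\<phi> (\<phi> y) \<notin> Bd" using xB Bd_alpha by simp
  hence pyB: "\<phi> y \<in> F \<inter> Bd" using b' yB unfolding tri_def by auto
  define c where "c = \<alpha> (\<phi> y)"
  have cB: "c \<in> Bd" "c \<notin> F" unfolding c_def using pyB Bd_alpha Bd_F by auto
  have sc: "s c = \<alpha> x" unfolding c_def using ppy by (simp add: s_apply ai)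
  have s2c: "(s^^2) c = \<phi> x" using sc by (simp add: numeral_2_eq_2 s_apply ai)
  have pxF: "\<phi> x \<in> F" using pxB by simp
  obtain a' m' where am: "bv a' m'" "vtx s a' = vtx s (\<phi> x)" using rep[OF pxF] by blast
  have "\<phi> x \<in> vtx s c" using s2c vtx_pow[where f=s and d=c and j=2] by simp
  hence "vtx s c = vtx s a'" using am vtx_same by simp
  hence cin: "c \<in> vtx s a'" using vtx_self[where f=s] by metis
  have "\<phi> x \<in> vtx s a'" using am vtx_self[where f=s] by metis
  hence e1: "\<phi> x = (s^^m') a'" using bv_uniq(2)[OF am(1)] pxB by auto
  have e2: "c = a'" using bv_uniq(1)[OF am(1) cB(1) cin cB(2)] .
  have "(s^^2) a' = (s^^m') a'" using e1 e2 s2c by simp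
  moreover have "m' < deg s a'" using am(1) unfolding bv_def by auto
  moreover have "2 < deg s a'" using dg[of a'] by simp
  ultimately have "m' = 2" using pow_inj[of 2 a' m'] by simp
  hence "col (s a') = Blue" using am(1) unfolding bv_def by simp
  moreover have "col (s a') \<noteq> Blue" using e2 sc ca[of x] xcol by simp
  ultimately show False by simp
qed

lemma all3: assumes "bv a m" shows "m = 3"
proof -
  define cnt where "cnt X = card {x. x \<in> F \<and> vtx s x = X}" for X
  have fin: "finite (vtx s ` F)" using Ffin by simp
  have le3: "cnt X \<le> 3" if X: "X \<in> vtx s ` F" for X
  proof -
    obtain d where d: "d \<in> F" "X = vtx s d" using X by auto
    obtain a m where am: "bv a m" "vtx s a = vtx s d" using rep d by blast
    have "m \<le> 3" using bv_le4[OF am(1)] no4[OF am(1)] by simp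
    thus ?thesis using bv_card[OF am(1)] am d unfolding cnt_def by simp
  qed
  have "card F = sum (\<lambda>_. 1::nat) F" by simp
  also have "\<dots> = sum cnt (vtx s ` F)" unfolding cnt_def
    using sum.image_gen[OF Ffin, of "\<lambda>_. 1::nat" "vtx s"] by simp
  finally have "sum cnt (vtx s ` F) = sum (\<lambda>_. 3) (vtx s ` F)" using card_F3 by simp
  hence "\<forall>X\<in>vtx s ` F. cnt X = 3" using sum_mono_inv[where f=cnt and g="\<lambda>_. 3"] le3 fin
    by (metis order_antisym_conv)
  thus ?thesis using bv_in[OF assms] bv_card[OF assms] unfolding cnt_def by auto
qed

lemma final:
  assumes blue: "(\<And>a m. bv a m \<Longrightarrow> m = 3) \<Longrightarrow> \<forall>b\<in>F \<inter> Bd. col b = Blue"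
    and ne: "F \<noteq> {}"
  shows False
proof -
  have bl: "\<forall>b\<in>F \<inter> Bd. col b = Blue" using blue all3 by blast
  obtain d where d: "d \<in> F" using ne by auto
  obtain a m where am: "bv a m" using rep[OF d] by blast
  have m3: "m = 3" using all3[OF am] .
  define x where "x = (s^^2) a"
  have xF: "x \<in> F" unfolding x_def using bv_F[OF am, of 2] am m3 unfolding bv_def by auto
  have "s x = (s^^m) a" unfolding x_def m3 by (simp add: numeral_3_eq_3 numeral_2_eq_2)
  hence "col (s x) = Blue" using bl bv_mF[OF am] by simp
  hence xr: "col x = Red" using col_s[of x] by (cases "col x") auto
  obtain b where b: "b \<in> F \<inter> Bd" "b \<in> tri x" using tri_has_bd[OF xF] by blast
  have "col b = Red" using tri_col[OF b(2)] xr by simp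
  thus False using bl b by auto
qed


end

lemma mod_suc_inj: fixes i j L :: nat
  assumes "i < L" "j < L" "(i+1) mod L = (j+1) mod L" shows "i = j"
proof -
  have h: "(x+1) mod L = (if x + 1 = L then 0 else x + 1)" if "x < L" for x
    using that by auto
  show ?thesis using assms h[OF assms(1)] h[OF assms(2)] by (auto split: if_splits)
qed

locale WK = RT +
  fixes W W' :: "'a list"
  assumes cw: "closed_walk \<alpha> \<phi> W" and cw': "closed_walk \<alpha> \<phi> W'"
  and sw: "simple_walk \<alpha> \<phi> W" and dj: "disjoint_walks \<alpha> \<phi> W W'"
  and BdW: "Bd = set W \<union> \<alpha> ` set W \<union> set W' \<union> \<alpha> ` set W'"
  and nbad: "\<forall>i<length W. \<not> bad_turn \<alpha> \<phi> col (W!i) (W!((i+1) mod length W))"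
begin

abbreviation L where "L \<equiv> length W"

lemma Lpos: "0 < L" using cw unfolding closed_walk_def by simp

lemma nxt_lt: "(i+1) mod L < L" using Lpos by simp

lemma step_vtx: "i < L \<Longrightarrow> vtx s (W!((i+1) mod L)) = vtx s (\<alpha> (W!i))"
  using cw vtx_same unfolding closed_walk_def by blast

lemma step_vtx': "i < length W' \<Longrightarrow> vtx s (W'!((i+1) mod length W')) = vtx s (\<alpha> (W'!i))"
  using cw' vtx_same unfolding closed_walk_def by blast

lemma Lpos': "0 < length W'" using cw' unfolding closed_walk_def by simp

lemma bd_at: assumes i: "i < L" and x: "x \<in> Bd" "x \<in> vtx s (W!((i+1) mod L))"
  shows "x = \<alpha> (W!i) \<or> x = W!((i+1) mod L)"
proof -
  let ?e' = "W!((i+1) mod L)"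
  have vx: "vtx s x = vtx s ?e'" using vtx_same x(2) by simp
  consider (a) "x \<in> set W" | (b) "x \<in> \<alpha> ` set W" | (c) "x \<in> set W'" | (d) "x \<in> \<alpha> ` set W'"
    using x(1) BdW by blast
  thus ?thesis
  proof cases
    case a
    then obtain j where j: "j < L" "x = W!j" by (metis in_set_conv_nth)
    have "j = (i+1) mod L"
    proof (rule ccontr)
      assume "j \<noteq> (i+1) mod L"
      hence "vtx s (W!j) \<noteq> vtx s ?e'" using sw j nxt_lt unfolding simple_walk_def by blast
      thus False using vx j by simp
    qed
    thus ?thesis using j by simp
  next
    case b
    then obtain j where j: "j < L" "x = \<alpha> (W!j)" by (metis in_set_conv_nth imageE)
    have "vtx s (W!((j+1) mod L)) = vtx s ?e'" using step_vtx[OF j(1)] vx j by simp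
    hence "(j+1) mod L = (i+1) mod L"
      using sw nxt_lt unfolding simple_walk_def by metis
    hence "j = i" using mod_suc_inj j(1) i by metis
    thus ?thesis using j by simp
  next
    case c
    then obtain j where j: "j < length W'" "x = W'!j" by (metis in_set_conv_nth)
    have "vtx s ?e' \<noteq> vtx s (W'!j)" using dj j nxt_lt unfolding disjoint_walks_def by blast
    thus ?thesis using vx j by simp
  next
    case d
    then obtain j where j: "j < length W'" "x = \<alpha> (W'!j)" by (metis in_set_conv_nth imageE)
    have "vtx s ?e' \<noteq> vtx s (W'!((j+1) mod length W'))"
      using dj Lpos' nxt_lt unfolding disjoint_walks_def by simp
    thus ?thesis using vx j step_vtx'[OF j(1)] by simp
  qed
qed

lemma lturn_prop: assumes i: "i < L"
  shows "(s ^^ lturn \<alpha> \<phi> (W!i) (W!((i+1) mod L))) (\<alpha> (W!i)) = W!((i+1) mod L)"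
    and "lturn \<alpha> \<phi> (W!i) (W!((i+1) mod L)) < deg s (\<alpha> (W!i))"
proof -
  let ?e = "W!i" and ?e' = "W!((i+1) mod L)"
  have "?e' \<in> vtx s (\<alpha> ?e)" using cw i unfolding closed_walk_def by blast
  then obtain j where j: "(s^^j) (\<alpha> ?e) = ?e'" unfolding vtx_def by auto
  hence j': "(s^^(j mod deg s (\<alpha> ?e))) (\<alpha> ?e) = ?e'" using powmod by metis
  show "(s ^^ lturn \<alpha> \<phi> ?e ?e') (\<alpha> ?e) = ?e'"
    unfolding lturn_def using LeastI[of "\<lambda>k. (s^^k) (\<alpha> ?e) = ?e'", OF j] .
  have "lturn \<alpha> \<phi> ?e ?e' \<le> j mod deg s (\<alpha> ?e)"
    unfolding lturn_def by (rule Least_le) (rule j')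
  also have "\<dots> < deg s (\<alpha> ?e)" using deg_pos by simp
  finally show "lturn \<alpha> \<phi> ?e ?e' < deg s (\<alpha> ?e)" .
qed

lemma WL: assumes i: "i < L"
  defines "e \<equiv> W!i" and "e' \<equiv> W!((i+1) mod L)"
  defines "n \<equiv> deg s (\<alpha> e)" and "k \<equiv> lturn \<alpha> \<phi> e e'"
  shows "\<exists>a m. bv a m \<and> vtx s a = vtx s e' \<and>
     ((e \<in> F \<and> a = \<alpha> e \<and> m = k \<and> e' = (s^^m) a) \<or> (e \<notin> F \<and> a = e' \<and> m = n - k \<and> (s^^m) e' = \<alpha> e))"
proof -
  define a0 where "a0 = \<alpha> e"
  have sk: "(s^^k) a0 = e'" and kn: "k < n"
    using lturn_prop[OF i] unfolding a0_def k_def e_def e'_def n_def by auto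
  have nb: "\<not> bad_turn \<alpha> \<phi> col e e'" using nbad i unfolding e_def e'_def by blast
  have rt: "rturn \<alpha> \<phi> e e' = n - k" unfolding rturn_def n_def k_def ..
  have k0: "k \<noteq> 0" "k \<noteq> 1" "n - k \<noteq> 1" "k = 2 \<longrightarrow> col e \<noteq> Red" "n - k = 2 \<longrightarrow> col e \<noteq> Red"
    using nb rt unfolding bad_turn_def k_def by auto
  have eW: "e \<in> set W" "e' \<in> set W" unfolding e_def e'_def using i nxt_lt by auto
  have eBd: "e \<in> Bd" "e' \<in> Bd" "a0 \<in> Bd" using eW BdW unfolding a0_def by auto
  have ve': "vtx s e' = vtx s a0" unfolding e'_def a0_def e_def using step_vtx[OF i] .
  have e'in: "e' \<in> vtx s a0" using ve' vtx_self[where f=s and d=e'] by metis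
  have BdV: "Bd \<inter> vtx s a0 = {a0, (s^^k) a0}"
  proof
    show "Bd \<inter> vtx s a0 \<subseteq> {a0, (s^^k) a0}"
      using bd_at[OF i] ve' sk unfolding a0_def e_def e'_def by auto
    show "{a0, (s^^k) a0} \<subseteq> Bd \<inter> vtx s a0" using eBd sk e'in vtx_self[where f=s and d=a0] by auto
  qed
  have n8: "8 \<le> n" unfolding n_def using dg .
  show ?thesis
  proof (cases "e \<in> F")
    case True
    have a0F: "a0 \<notin> F" using Bd_F[OF eBd(1)] True unfolding a0_def by simp
    have col1: "col (s a0) = col e" unfolding a0_def by (simp add: s_apply ai cp)
    have "bv a0 k" unfolding bv_def using eBd a0F k0 kn BdV col1 n_def a0_def
      by (cases "col e") auto
    moreover have "e' = (s^^k) a0" using sk by simp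
    ultimately show ?thesis using True ve' unfolding a0_def by blast
  next
    case False
    have a0F: "a0 \<in> F" using Bd_F[OF eBd(1)] False unfolding a0_def by simp
    have nbj: "(s^^j) a0 \<notin> Bd" if "0 < j" "j < k" for j
    proof
      assume "(s^^j) a0 \<in> Bd"
      hence "(s^^j) a0 = (s^^0) a0 \<or> (s^^j) a0 = (s^^k) a0" using BdV vtx_pow[where f=s and d=a0 and j=j] by auto
      thus False using pow_inj[of j a0 0] pow_inj[of j a0 k] that kn unfolding n_def a0_def by auto
    qed
    have "(s^^k) a0 \<in> F \<longleftrightarrow> s a0 \<in> F" by (rule PL) (use nbj k0 in auto)
    moreover have "s a0 \<notin> F" using sF False unfolding a0_def by (simp add: ai)
    ultimately have e'F: "e' \<notin> F" using sk by simp
    define m where "m = n - k"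
    have m2: "2 \<le> m" using k0 kn unfolding m_def by auto
    have dege': "deg s e' = n" using deg_same[OF e'in] unfolding n_def a0_def .
    have mn: "m < deg s e'" using dege' k0 kn unfolding m_def by auto
    have sme: "(s^^m) e' = a0"
    proof -
      have "(s^^m) e' = (s^^(m + k)) a0" using sk by (simp add: funpow_add)
      also have "m + k = n" using kn unfolding m_def by simp
      finally show ?thesis using per[of a0] unfolding n_def a0_def by simp
    qed
    have BdV': "Bd \<inter> vtx s e' = {e', (s^^m) e'}" using BdV ve' sme sk by auto
    have colm: "col (s e') = Blue" if "m = 2"
    proof -
      have "(s^^2) e' = a0" using sme that by simp
      hence "s (s e') = a0" by (simp add: numeral_2_eq_2)
      hence "col a0 \<noteq> col (s e')" using col_s[of "s e'"] by simp
      moreover have "col a0 \<noteq> col e" unfolding a0_def using ca .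
      moreover have "col e \<noteq> Red" using k0(5) that unfolding m_def by simp
      ultimately show ?thesis by (cases "col e"; cases "col (s e')"; cases "col a0") auto
    qed
    have "bv e' m" unfolding bv_def using eBd e'F m2 mn BdV' colm by auto
    thus ?thesis using False sme unfolding m_def a0_def by blast
  qed
qed


lemma IL_W: assumes "x \<in> set W \<union> \<alpha> ` set W" shows "\<exists>a m. bv a m \<and> vtx s a = vtx s x"
proof -
  consider (a) "x \<in> set W" | (b) "x \<in> \<alpha> ` set W" using assms by blast
  thus ?thesis
  proof cases
    case a
    then obtain j where j: "j < L" "x = W!j" by (metis in_set_conv_nth)
    define i where "i = (if j = 0 then L - 1 else j - 1)"
    have i: "i < L" "(i+1) mod L = j" unfolding i_def using j(1) Lpos by auto
    have "\<exists>a m. bv a m \<and> vtx s a = vtx s (W!((i+1) mod L))" using WL[OF i(1)] by blast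
    thus ?thesis using i(2) j(2) by simp
  next
    case b
    then obtain j where j: "j < L" "x = \<alpha> (W!j)" by (metis in_set_conv_nth imageE)
    have "\<exists>a m. bv a m \<and> vtx s a = vtx s (W!((j+1) mod L))" using WL[OF j(1)] by blast
    thus ?thesis using step_vtx[OF j(1)] j(2) by simp
  qed
qed

lemma step3: assumes all3: "\<And>a m. bv a m \<Longrightarrow> m = 3" and i: "i < L"
  shows "(W!i \<in> F \<longleftrightarrow> W!((i+1) mod L) \<in> F) \<and> col (W!((i+1) mod L)) = col (W!i) \<and>
    (W!i \<in> F \<longrightarrow> lturn \<alpha> \<phi> (W!i) (W!((i+1) mod L)) = 3) \<and>
    (W!i \<notin> F \<longrightarrow> deg s (\<alpha> (W!i)) - lturn \<alpha> \<phi> (W!i) (W!((i+1) mod L)) = 3)"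
proof -
  let ?e = "W!i" and ?e' = "W!((i+1) mod L)"
  obtain a m where "bv a m \<and> vtx s a = vtx s ?e' \<and>
    ((?e \<in> F \<and> a = \<alpha> ?e \<and> m = lturn \<alpha> \<phi> ?e ?e' \<and> ?e' = (s^^m) a) \<or>
     (?e \<notin> F \<and> a = ?e' \<and> m = deg s (\<alpha> ?e) - lturn \<alpha> \<phi> ?e ?e' \<and> (s^^m) ?e' = \<alpha> ?e))"
    using WL[OF i] by (elim exE) (rule that)
  hence am: "bv a m" "vtx s a = vtx s ?e'"
    "(?e \<in> F \<and> a = \<alpha> ?e \<and> m = lturn \<alpha> \<phi> ?e ?e' \<and> ?e' = (s^^m) a) \<or>
     (?e \<notin> F \<and> a = ?e' \<and> m = deg s (\<alpha> ?e) - lturn \<alpha> \<phi> ?e ?e' \<and> (s^^m) ?e' = \<alpha> ?e)"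
    by blast+
  have m3: "m = 3" using all3[OF am(1)] .
  show ?thesis
  proof (cases "?e \<in> F")
    case True
    have h1: "a = \<alpha> ?e" using am(3) True by blast
    have h2: "m = lturn \<alpha> \<phi> ?e ?e'" using am(3) True by blast
    have "?e' = (s^^m) a" using am(3) True by blast
    hence h3: "?e' = (s^^3) a" using m3 by simp
    have e'F: "?e' \<in> F" using bv_mF[OF am(1)] h3 m3 by simp
    have "col ?e' = col (s a)" using h3 col_pow[of 3 a] by simp
    also have "\<dots> = col ?e" using h1 by (simp add: s_apply ai cp)
    finally have c: "col ?e' = col ?e" .
    have lt: "lturn \<alpha> \<phi> ?e ?e' = 3" using h2 m3 by simp
    show ?thesis using True e'F c lt by simp
  next
    case False
    have h1: "a = ?e'" using am(3) False by blast
    have h2: "m = deg s (\<alpha> ?e) - lturn \<alpha> \<phi> ?e ?e'" using am(3) False by blast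
    have "(s^^m) ?e' = \<alpha> ?e" using am(3) False by blast
    hence h3: "(s^^3) ?e' = \<alpha> ?e" using m3 by simp
    have e'F: "?e' \<notin> F" using am(1) h1 unfolding bv_def by simp
    have c1: "col (\<alpha> ?e) = col (s ?e')" using h3 col_pow[of 3 ?e'] by simp
    have c2: "col (s ?e') \<noteq> col ?e'" by (rule col_s)
    have c3: "col (\<alpha> ?e) \<noteq> col ?e" by (rule ca)
    have c: "col ?e' = col ?e" using c1 c2 c3
      by (cases "col ?e"; cases "col ?e'"; cases "col (\<alpha> ?e)") auto
    have lt: "deg s (\<alpha> ?e) - lturn \<alpha> \<phi> ?e ?e' = 3" using h2 m3 by simp
    show ?thesis using False e'F c lt by simp
  qed
qed

lemma blueW: assumes all3: "\<And>a m. bv a m \<Longrightarrow> m = 3"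
  and r1: "\<not> (\<forall>i<L. turn_3r \<alpha> \<phi> col (W!i) (W!((i+1) mod L)))"
  and r2: "\<not> (\<forall>i<L. turn_m3b \<alpha> \<phi> col (W!i) (W!((i+1) mod L)))"
  shows "\<forall>b \<in> F \<inter> (set W \<union> \<alpha> ` set W). col b = Blue"
proof -
  have inv: "\<forall>i<L. (W!i \<in> F \<longleftrightarrow> W!0 \<in> F) \<and> col (W!i) = col (W!0)"
  proof (intro allI impI)
    fix i assume "i < L"
    thus "(W!i \<in> F \<longleftrightarrow> W!0 \<in> F) \<and> col (W!i) = col (W!0)"
    proof (induction i)
      case 0 thus ?case by simp
    next
      case (Suc i)
      have "(i+1) mod L = Suc i" using Suc.prems by simp
      thus ?case using step3[OF all3, where i=i] Suc by simp
    qed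
  qed
  show ?thesis
  proof (cases "W!0 \<in> F")
    case True
    have "\<forall>i<L. turn_3r \<alpha> \<phi> col (W!i) (W!((i+1) mod L))" if "col (W!0) = Red"
      using step3[OF all3] inv True that unfolding turn_3r_def by auto
    hence cb: "col (W!0) \<noteq> Red" using r1 by blast
    show ?thesis
    proof
      fix b assume b: "b \<in> F \<inter> (set W \<union> \<alpha> ` set W)"
      show "col b = Blue"
      proof (cases "b \<in> set W")
        case True
        then obtain j where "j < L" "b = W!j" by (metis in_set_conv_nth)
        thus ?thesis using inv cb by (cases "col (W!0)") auto
      next
        case False
        then obtain j where j: "j < L" "b = \<alpha> (W!j)" using b by (metis in_set_conv_nth imageE Int_iff Un_iff)
        have "W!j \<in> F" "W!j \<in> Bd" using inv True j BdW by auto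
        hence "b \<notin> F" using Bd_F j by simp
        thus ?thesis using b by simp
      qed
    qed
  next
    case False
    have "\<forall>i<L. turn_m3b \<alpha> \<phi> col (W!i) (W!((i+1) mod L))" if "col (W!0) = Blue"
    proof (intro allI impI)
      fix i assume i: "i < L"
      have n8: "8 \<le> deg s (\<alpha> (W!i))" using dg .
      have "deg s (\<alpha> (W!i)) - lturn \<alpha> \<phi> (W!i) (W!((i+1) mod L)) = 3"
        using step3[OF all3 i] inv i False by simp
      thus "turn_m3b \<alpha> \<phi> col (W!i) (W!((i+1) mod L))"
        unfolding turn_m3b_def rturn_def using n8 inv i that by auto
    qed
    hence cr: "col (W!0) \<noteq> Blue" using r2 by blast
    show ?thesis
    proof
      fix b assume b: "b \<in> F \<inter> (set W \<union> \<alpha> ` set W)"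
      show "col b = Blue"
      proof (cases "b \<in> set W")
        case True
        then obtain j where "j < L" "b = W!j" by (metis in_set_conv_nth)
        thus ?thesis using inv False b by auto
      next
        case False
        then obtain j where j: "j < L" "b = \<alpha> (W!j)" using b by (metis in_set_conv_nth imageE Int_iff Un_iff)
        have "col (W!j) = Red" using inv j cr by (cases "col (W!0)") auto
        thus ?thesis using j ca[of "W!j"] by (cases "col b") auto
      qed
    qed
  qed
qed


end

theorem lemma3p6:
  fixes alpha phi :: "'d \<Rightarrow> 'd" and col :: "'d \<Rightarrow> color" and C C' :: "'d list"
  assumes "reducing_triangulation alpha phi col"
    and "closed_walk alpha phi C" and "simple_walk alpha phi C"
    and "closed_walk alpha phi C'" and "simple_walk alpha phi C'"
    and "disjoint_walks alpha phi C C'"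
    and "bound_annulus alpha phi C C'"
  shows "\<not> (reduced_closed_walk alpha phi col C \<and> reduced_closed_walk alpha phi col C')"
proof
  assume R: "reduced_closed_walk alpha phi col C \<and> reduced_closed_walk alpha phi col C'"
  have rt: "\<And>d. alpha (alpha d) = d" "\<And>d. alpha d \<noteq> d" "\<And>d. phi (phi (phi d)) = d" "\<And>d. phi d \<noteq> d"
    "\<And>d. finite (vtx (rot alpha phi) d)" "\<And>d. 8 \<le> deg (rot alpha phi) d"
    "\<And>d. col (phi d) = col d" "\<And>d. col (alpha d) \<noteq> col d"
    using assms(1) unfolding reducing_triangulation_def by auto
  obtain F where F: "finite F" "\<forall>d\<in>F. phi d \<in> F"
    "\<forall>x. ((x \<in> F) \<longleftrightarrow> (alpha x \<notin> F)) \<longleftrightarrow> x \<in> set C \<union> alpha ` set C \<union> set C' \<union> alpha ` set C'"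
    "int (card (vtx (rot alpha phi) ` F)) - int (card ((\<lambda>d. {d, alpha d}) ` F))
       + int (card ((\<lambda>d. {d, phi d, phi (phi d)}) ` F)) = 0"
    using assms(7) unfolding bound_annulus_def by blast
  define Bd where "Bd = set C \<union> alpha ` set C \<union> set C' \<union> alpha ` set C'"
  interpret RT alpha phi col F Bd
    by unfold_locales (use rt F in \<open>auto simp: Bd_def\<close>)
  have dj': "disjoint_walks alpha phi C' C"
    using assms(6) unfolding disjoint_walks_def by metis
  have redC: "closed_walk alpha phi C"
     "\<forall>i<length C. \<not> bad_turn alpha phi col (C ! i) (C ! ((i + 1) mod length C))"
     "\<not> (\<forall>i<length C. turn_3r alpha phi col (C ! i) (C ! ((i + 1) mod length C)))"
     "\<not> (\<forall>i<length C. turn_m3b alpha phi col (C ! i) (C ! ((i + 1) mod length C)))"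
    using R unfolding reduced_closed_walk_def by auto
  have redC': "\<forall>i<length C'. \<not> bad_turn alpha phi col (C' ! i) (C' ! ((i + 1) mod length C'))"
     "\<not> (\<forall>i<length C'. turn_3r alpha phi col (C' ! i) (C' ! ((i + 1) mod length C')))"
     "\<not> (\<forall>i<length C'. turn_m3b alpha phi col (C' ! i) (C' ! ((i + 1) mod length C')))"
    using R unfolding reduced_closed_walk_def by auto
  interpret W1: WK alpha phi col F Bd C C'
    by unfold_locales (use assms redC in \<open>auto simp: Bd_def\<close>)
  interpret W2: WK alpha phi col F Bd C' C
    by unfold_locales (use assms redC' dj' in \<open>auto simp: Bd_def\<close>)
  have edge_eq: "edge = (\<lambda>d. {d, alpha d})" by (rule ext) (simp add: edge_def)
  have tri_eq': "tri = (\<lambda>d. {d, phi d, phi (phi d)})" by (rule ext) (simp add: tri_def)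
  interpret RT1 alpha phi col F Bd
  proof unfold_locales
    fix d assume d: "d \<in> F" "Bd \<inter> vtx (rot alpha phi) d \<noteq> {}"
    then obtain x where x: "x \<in> Bd" "x \<in> vtx (rot alpha phi) d" by blast
    have vx: "vtx (rot alpha phi) x = vtx (rot alpha phi) d" using vtx_same x(2) by simp
    have "x \<in> set C \<union> alpha ` set C \<or> x \<in> set C' \<union> alpha ` set C'" using x(1) unfolding Bd_def by blast
    hence "\<exists>a m. bv a m \<and> vtx (rot alpha phi) a = vtx (rot alpha phi) x"
      using W1.IL_W W2.IL_W by blast
    thus "\<exists>a m. bv a m \<and> vtx (rot alpha phi) a = vtx (rot alpha phi) d" using vx by simp
  next
    show "int (card (vtx (rot alpha phi) ` F)) - int (card (edge ` F)) + int (card (tri ` F)) = 0"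
      unfolding edge_eq tri_eq' using F(4) .
  qed
  have ne: "F \<noteq> {}"
  proof
    assume "F = {}"
    have "C \<noteq> []" using assms(2) unfolding closed_walk_def by simp
    hence "C ! 0 \<in> Bd" unfolding Bd_def by simp
    hence "C ! 0 \<in> F \<or> alpha (C ! 0) \<in> F" using Bd_F by blast
    thus False using \<open>F = {}\<close> by simp
  qed
  show False
  proof (rule final[OF _ ne])
    assume a3: "\<And>a m. bv a m \<Longrightarrow> m = 3"
    have b1: "\<forall>b\<in>F \<inter> (set C \<union> alpha ` set C). col b = Blue"
      by (rule W1.blueW[OF a3 redC(3) redC(4)])
    have b2: "\<forall>b\<in>F \<inter> (set C' \<union> alpha ` set C'). col b = Blue"
      by (rule W2.blueW[OF a3 redC'(2) redC'(3)])
    show "\<forall>b\<in>F \<inter> Bd. col b = Blue" using b1 b2 unfolding Bd_def by blast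
  qed
qed

end
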